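(* Consider a steady travelling-wave solution of the one-dimensional solid-propellant combustion model described in the context, with $c<0$ and $\dot m=-\rho_s c>0$. Then $x\mapsto \omega(x)$ is integrable on $(0,\infty)$ and $$\int_0^{+\infty}\omega(x)\,dx=-\frac{\dot m}{M\nu}.$$
   Context: Travelling-wave frame: solid in $x<0$, gas in $x>0$, interface at $x=0$; $c<0$ is the constant regression velocity, $\rho_s>0$ the solid density and $\dot m:=-\rho_s c$. The gas contains two species with common molar mass $M>0$: a reactant with mass fraction $Y$ and a product with mass fraction $1-Y$, linked by one irreversible reaction with global stoichiometric coefficient $\nu<0$ for the reactant. On $x>0$: $\rho>0$, $u$ are $C^1$, $Y$ is $C^2$, the species diffusion coefficient $D_g>0$ is a continuous function, and the reaction rate $\omega(x)=\omega(T(x),Y(x))\ge 0$ is continuous. The equations are: $-c\rho'+(\rho u)'=0$ and $\rho(u-c)Y'-(\rho D_g Y')'=\nu M\omega$ for $x>0$. Interface conditions: $\rho(0^+)(u(0^+)-c)=-\rho_s c$ (no mass accumulation); the pyrolysis injects pure reactant, i.e. the injection mass fraction is $Y(0^-)=1$; species balance $\dot m\,Y(0^-)=\dot m\,Y(0^+)-\rho(0^+)D_g(0^+)Y'(0^+)$. Far field: the reactant is completely consumed, $Y(x)\to0$, and the diffusive flux vanishes, $\rho D_g Y'(x)\to0$, as $x\to+\infty$. *)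

theory Defs
  imports "HOL-Analysis.Analysis"
begin

end

theory Submission
  imports Defs
begin

theorem proposition2:
  fixes c rho_s M nu :: real
    and rho u Y D omega :: "real \<Rightarrow> real"
    and rho0 u0 Y0 Yp0 D0 Y_inj :: real
  assumes c_neg: "c < 0" and rho_s_pos: "rho_s > 0" and M_pos: "M > 0" and nu_neg: "nu < 0"
    and rho_pos: "\<And>x. x > 0 \<Longrightarrow> rho x > 0"
    and rho_C1: "\<And>x. x > 0 \<Longrightarrow> rho differentiable (at x)"
    and rho'_cont: "continuous_on {0<..} (deriv rho)"
    and u_C1: "\<And>x. x > 0 \<Longrightarrow> u differentiable (at x)"
    and u'_cont: "continuous_on {0<..} (deriv u)"
    and Y_C1: "\<And>x. x > 0 \<Longrightarrow> Y differentiable (at x)"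
    and Y_C2: "\<And>x. x > 0 \<Longrightarrow> (deriv Y) differentiable (at x)"
    and Y''_cont: "continuous_on {0<..} (deriv (deriv Y))"
    and D_cont: "continuous_on {0<..} D"
    and D_pos: "\<And>x. x > 0 \<Longrightarrow> D x > 0"
    and omega_cont: "continuous_on {0<..} omega"
    and omega_nonneg: "\<And>x. x > 0 \<Longrightarrow> omega x \<ge> 0"
    and flux_diff: "\<And>x. x > 0 \<Longrightarrow> (\<lambda>y. rho y * D y * deriv Y y) differentiable (at x)"
    and mass_eq: "\<And>x. x > 0 \<Longrightarrow> - c * deriv rho x + deriv (\<lambda>y. rho y * u y) x = 0"
    and species_eq: "\<And>x. x > 0 \<Longrightarrow>
        rho x * (u x - c) * deriv Y x - deriv (\<lambda>y. rho y * D y * deriv Y y) x = nu * M * omega x"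
    and lim_rho: "(rho \<longlongrightarrow> rho0) (at_right 0)"
    and lim_u: "(u \<longlongrightarrow> u0) (at_right 0)"
    and lim_Y: "(Y \<longlongrightarrow> Y0) (at_right 0)"
    and lim_Y': "(deriv Y \<longlongrightarrow> Yp0) (at_right 0)"
    and lim_D: "(D \<longlongrightarrow> D0) (at_right 0)"
    and no_mass_acc: "rho0 * (u0 - c) = - rho_s * c"
    and injection: "Y_inj = 1"
    and species_bal: "(- rho_s * c) * Y_inj = (- rho_s * c) * Y0 - rho0 * D0 * Yp0"
    and far_Y: "(Y \<longlongrightarrow> 0) at_top"
    and far_flux: "((\<lambda>x. rho x * D x * deriv Y x) \<longlongrightarrow> 0) at_top"
  shows "omega integrable_on {0<..} \<and>
         integral {0<..} omega = - (- rho_s * c) / (M * nu)"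
proof -
  define m where "m = - rho_s * c"
  have m_pos: "m > 0" using c_neg rho_s_pos by (simp add: m_def mult_pos_neg)
  define F where "F = (\<lambda>y. rho y * u y - c * rho y)"
  have F_der: "(F has_field_derivative 0) (at x within {0<..})" if x: "x \<in> {0<..}" for x
  proof -
    from x have x0: "x > 0" by simp
    have dr: "(rho has_real_derivative deriv rho x) (at x)"
      using rho_C1[OF x0] DERIV_deriv_iff_real_differentiable by blast
    have du: "(u has_real_derivative deriv u x) (at x)"
      using u_C1[OF x0] DERIV_deriv_iff_real_differentiable by blast
    have dp: "((\<lambda>y. rho y * u y) has_real_derivative rho x * deriv u x + deriv rho x * u x) (at x)"
      using DERIV_mult[OF dr du] by (simp add: algebra_simps)
    have "deriv (\<lambda>y. rho y * u y) x = rho x * deriv u x + deriv rho x * u x"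
      using DERIV_imp_deriv[OF dp] .
    with mass_eq[OF x0] have eq: "rho x * deriv u x + deriv rho x * u x - c * deriv rho x = 0" by simp
    have "(F has_real_derivative rho x * deriv u x + deriv rho x * u x - c * deriv rho x) (at x)"
      unfolding F_def using DERIV_diff[OF dp DERIV_cmult[OF dr, of c]] by simp
    then show ?thesis using eq by (simp add: has_field_derivative_at_within)
  qed
  obtain K where K: "\<And>x. x \<in> {0<..} \<Longrightarrow> F x = K"
    using has_field_derivative_zero_constant[OF convex_real_interval(3) F_der] by blast
  have "(F \<longlongrightarrow> rho0 * u0 - c * rho0) (at_right 0)"
    unfolding F_def by (intro tendsto_intros lim_rho lim_u)
  moreover have "(F \<longlongrightarrow> K) (at_right 0)"
  proof (rule tendsto_eventually)
    show "\<forall>\<^sub>F x in at_right 0. F x = K"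
      unfolding eventually_at_right_field using K by (intro exI[of _ 1]) auto
  qed
  ultimately have "K = rho0 * u0 - c * rho0"
    using tendsto_unique[OF trivial_limit_at_right_real] by blast
  hence Fm: "\<And>x. x > 0 \<Longrightarrow> rho x * (u x - c) = m"
    using K no_mass_acc unfolding F_def m_def by (auto simp: algebra_simps)
  define G where "G = (\<lambda>y. rho y * D y * deriv Y y)"
  define H where "H = (\<lambda>y. m * Y y - G y)"
  have H_der: "(H has_real_derivative nu * M * omega x) (at x)" if x0: "x > 0" for x
  proof -
    have dY: "(Y has_real_derivative deriv Y x) (at x)"
      using Y_C1[OF x0] DERIV_deriv_iff_real_differentiable by blast
    have dG: "(G has_real_derivative deriv G x) (at x)"
      using flux_diff[OF x0] DERIV_deriv_iff_real_differentiable unfolding G_def by blast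
    have "(H has_real_derivative m * deriv Y x - deriv G x) (at x)"
      unfolding H_def using DERIV_diff[OF DERIV_cmult[OF dY, of m] dG] by simp
    moreover have "m * deriv Y x - deriv G x = nu * M * omega x"
      using species_eq[OF x0] Fm[OF x0] unfolding G_def by simp
    ultimately show ?thesis by simp
  qed
  have H0: "(H \<longlongrightarrow> m) (at_right 0)"
  proof -
    have "(H \<longlongrightarrow> m * Y0 - rho0 * D0 * Yp0) (at_right 0)"
      unfolding H_def G_def by (intro tendsto_intros lim_rho lim_D lim_Y lim_Y')
    moreover have "m * Y0 - rho0 * D0 * Yp0 = m"
      using species_bal[unfolded injection mult_1_right] unfolding m_def by linarith
    ultimately show ?thesis by simp
  qed
  have Hinf: "(H \<longlongrightarrow> 0) at_top"
  proof -
    have "(H \<longlongrightarrow> m * 0 - 0) at_top"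
      unfolding H_def G_def by (intro tendsto_intros far_Y far_flux)
    then show ?thesis by simp
  qed
  define a where "a = (\<lambda>k::nat. inverse (real (Suc k)))"
  define b where "b = (\<lambda>k::nat. real (Suc k))"
  have a_pos: "a k > 0" for k unfolding a_def by simp
  have ab: "a k \<le> b k" for k unfolding a_def b_def
  proof -
    have "inverse (real (Suc k)) \<le> 1" by (simp add: inverse_le_1_iff)
    also have "1 \<le> real (Suc k)" by simp
    finally show "inverse (real (Suc k)) \<le> real (Suc k)" .
  qed
  have a_mono: "a (Suc k) \<le> a k" for k unfolding a_def
    by (simp add: le_imp_inverse_le)
  have b_mono: "b k \<le> b (Suc k)" for k unfolding b_def by simp
  have int_ab: "(omega has_integral (H (b k) - H (a k)) / (nu * M)) {a k..b k}" for k
  proof -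
    have "((\<lambda>x. nu * M * omega x) has_integral H (b k) - H (a k)) {a k..b k}"
    proof (rule fundamental_theorem_of_calculus[OF ab])
      fix x assume "x \<in> {a k..b k}"
      hence "x > 0" using a_pos[of k] by simp
      then show "(H has_vector_derivative nu * M * omega x) (at x within {a k..b k})"
        using H_der has_real_derivative_iff_has_vector_derivative
        by (metis has_field_derivative_at_within)
    qed
    then have "((\<lambda>x. (1 / (nu * M)) * (nu * M * omega x)) has_integral (1 / (nu * M)) * (H (b k) - H (a k))) {a k..b k}"
      by (rule has_integral_mult_right)
    moreover have "nu * M \<noteq> 0" using nu_neg M_pos by simp
    ultimately show ?thesis by simp
  qed
  define f where "f = (\<lambda>k x. if x \<in> {a k..b k} then omega x else 0)"
  have f_int: "f k integrable_on {0<..}" for k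
    unfolding f_def integrable_restrict_Int
  proof -
    have "{a k..b k} \<inter> {0<..} = {a k..b k}" using a_pos[of k] by auto
    then show "omega integrable_on {a k..b k} \<inter> {0<..}" using int_ab[of k] by auto
  qed
  have f_integral: "integral {0<..} (f k) = (H (b k) - H (a k)) / (nu * M)" for k
  proof -
    have "{a k..b k} \<inter> {0<..} = {a k..b k}" using a_pos[of k] by auto
    then show ?thesis unfolding f_def integral_restrict_Int using int_ab[of k]
      by (simp add: integral_unique)
  qed
  have a0: "a \<longlonglongrightarrow> 0" unfolding a_def
      using LIMSEQ_inverse_real_of_nat by (simp add: inverse_eq_divide)
  have a_lim: "filterlim a (at_right 0) sequentially"
  proof (rule tendsto_imp_filterlim_at_right)
    show "a \<longlonglongrightarrow> 0" by (rule a0)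
    show "\<forall>\<^sub>F x in sequentially. 0 < a x" using a_pos by simp
  qed
  have b_lim: "filterlim b at_top sequentially"
  proof -
    have "filterlim (\<lambda>k. 1 + real k) at_top sequentially"
      by (rule filterlim_tendsto_add_at_top[OF tendsto_const filterlim_real_sequentially])
    then show ?thesis unfolding b_def by simp
  qed
  have lim_int: "(\<lambda>k. integral {0<..} (f k)) \<longlonglongrightarrow> (0 - m) / (nu * M)"
    unfolding f_integral
    by (intro tendsto_intros filterlim_compose[OF Hinf b_lim] filterlim_compose[OF H0 a_lim])
       (use nu_neg M_pos in auto)
  have mono: "f k x \<le> f (Suc k) x" if "x \<in> {0<..}" for k x
    using a_mono[of k] b_mono[of k] omega_nonneg that unfolding f_def by auto
  have pw: "(\<lambda>k. f k x) \<longlonglongrightarrow> omega x" if "x \<in> {0<..}" for x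
  proof (rule tendsto_eventually)
    from that have x0: "x > 0" by simp
    have "\<forall>\<^sub>F k in sequentially. a k < x"
      using a0 x0 by (rule order_tendstoD(2))
    moreover have "\<forall>\<^sub>F k in sequentially. x < b k"
      using b_lim unfolding filterlim_at_top_dense by blast
    ultimately show "\<forall>\<^sub>F k in sequentially. f k x = omega x"
      by eventually_elim (auto simp: f_def)
  qed
  have bnd: "bounded (range (\<lambda>k. integral {0<..} (f k)))"
    using lim_int convergent_imp_bounded by (metis convergent_def)
  from monotone_convergence_increasing[OF f_int mono pw bnd]
  have "omega integrable_on {0<..}" and "(\<lambda>k. integral {0<..} (f k)) \<longlonglongrightarrow> integral {0<..} omega"
    by auto
  moreover have "integral {0<..} omega = (0 - m) / (nu * M)"
    using LIMSEQ_unique calculation(2) lim_int by blast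
  ultimately show ?thesis unfolding m_def by (simp add: mult.commute)
qed

end
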